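(* Let $A,B\in\mathbb{R}^{m\times n}$ and $b\in\mathbb{R}^m$ with $\operatorname{rank}(B) = m$ and $m<n$, and let $1\le p\le\infty$. If $B^\dagger b\leq0$, $B^\dagger A\geq0$ and $\|B^\dagger A\|_p<1$, then the equation $Ax-B|x|=b$ has at least one nonnegative solution.
   Context: $B^\dagger$ is the Moore–Penrose inverse; $|x|$ is the entrywise absolute value; vector/matrix inequalities are entrywise; $\|\cdot\|_p$ on matrices is the operator norm induced by the vector $p$-norm. *)

theory Defs
  imports "HOL-Analysis.Analysis"
begin

definition is_moore_penrose :: "real^'n^'m \<Rightarrow> real^'m^'n \<Rightarrow> bool" where
  "is_moore_penrose B X \<longleftrightarrow>
     B ** X ** B = B \<and> X ** B ** X = X \<and>
     transpose (B ** X) = B ** X \<and> transpose (X ** B) = X ** B"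

definition moore_penrose :: "real^'n^'m \<Rightarrow> real^'m^'n" where
  "moore_penrose B = (THE X. is_moore_penrose B X)"

definition vec_pnorm :: "ereal \<Rightarrow> real^'n \<Rightarrow> real" where
  "vec_pnorm p x =
     (if p = \<infinity> then Max (range (\<lambda>i. \<bar>x $ i\<bar>))
      else (\<Sum>i\<in>UNIV. \<bar>x $ i\<bar> powr real_of_ereal p) powr (1 / real_of_ereal p))"

definition mat_pnorm :: "ereal \<Rightarrow> real^'n^'m \<Rightarrow> real" where
  "mat_pnorm p M = (SUP x\<in>{x. x \<noteq> 0}. vec_pnorm p (M *v x) / vec_pnorm p x)"

definition vec_abs :: "real^'n \<Rightarrow> real^'n" where
  "vec_abs x = (\<chi> i. \<bar>x $ i\<bar>)"

end

theory Submission imports Defs begin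

lemma surj_right_inv:
  fixes B :: "real^'n^'m" and X :: "real^'m^'n"
  assumes s: "surj ((*v) B)" and h: "B ** X ** B = B"
  shows "B ** X = mat 1"
proof -
  have "(B ** X) *v y = mat 1 *v y" for y
  proof -
    obtain z where z: "y = B *v z" using s by (metis surjD)
    have "(B ** X) *v y = (B ** X ** B) *v z" by (simp add: z matrix_vector_mul_assoc)
    also have "\<dots> = y" using h z by simp
    finally show ?thesis by simp
  qed
  then show ?thesis by (simp add: matrix_eq)
qed

lemma mp_unique:
  fixes B :: "real^'n^'m" and X Y :: "real^'m^'n"
  assumes s: "surj ((*v) B)" and X: "is_moore_penrose B X" and Y: "is_moore_penrose B Y"
  shows "X = Y"
proof -
  have bx: "B ** X = mat 1" and by': "B ** Y = mat 1"
    using surj_right_inv[OF s] X Y unfolding is_moore_penrose_def by auto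
  have sx: "transpose (X ** B) = X ** B" and sy: "transpose (Y ** B) = Y ** B"
    using X Y unfolding is_moore_penrose_def by auto
  have "X ** B = transpose (X ** B)" using sx by simp
  also have "\<dots> = transpose (X ** (B ** Y ** B))" using Y unfolding is_moore_penrose_def by simp
  also have "\<dots> = transpose ((X ** B) ** (Y ** B))" by (simp add: matrix_mul_assoc)
  also have "\<dots> = (Y ** B) ** (X ** B)" by (subst matrix_transpose_mul, simp only: sx sy)
  also have "\<dots> = Y ** B" by (metis bx matrix_mul_assoc matrix_mul_rid)
  finally have xb: "X ** B = Y ** B" .
  have "X = (X ** B) ** X" by (metis bx matrix_mul_assoc matrix_mul_rid)
  also have "\<dots> = Y" by (metis xb bx matrix_mul_assoc matrix_mul_rid)
  finally show ?thesis .
qed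

lemma mp_exists:
  fixes B :: "real^'n^'m"
  assumes s: "surj ((*v) B)"
  shows "\<exists>X. is_moore_penrose B X"
proof -
  define G where "G = B ** transpose B"
  have ker: "G *v y = 0 \<Longrightarrow> y = 0" for y
  proof -
    assume "G *v y = 0"
    then have "inner y (G *v y) = 0" by simp
    then have "inner (transpose B *v y) (transpose B *v y) = 0"
      unfolding G_def by (metis dot_lmul_matrix matrix_vector_mul_assoc transpose_matrix_vector)
    then have t: "transpose B *v y = 0" by simp
    obtain z where z: "y = B *v z" using s by (metis surjD)
    have "inner y y = inner (y v* B) z" using z by (simp add: dot_lmul_matrix)
    also have "\<dots> = 0" using t by simp
    finally show "y = 0" by simp
  qed
  then obtain Gi where gi: "Gi ** G = mat 1" using matrix_left_invertible_ker by blast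
  then have gi2: "G ** Gi = mat 1" using matrix_left_right_inverse by blast
  have Gs: "transpose G = G" unfolding G_def by (simp add: matrix_transpose_mul)
  have "transpose Gi ** G = mat 1"
    using arg_cong[OF gi2, of transpose] by (simp add: matrix_transpose_mul Gs)
  then have "transpose Gi = Gi"
    by (metis gi2 matrix_mul_assoc matrix_mul_lid matrix_mul_rid)
  define X where "X = transpose B ** Gi"
  have bx: "B ** X = mat 1" unfolding X_def G_def using gi2 G_def by (simp add: matrix_mul_assoc)
  have "transpose (X ** B) = X ** B"
    unfolding X_def by (simp add: matrix_transpose_mul \<open>transpose Gi = Gi\<close> matrix_mul_assoc)
  moreover have "B ** X ** B = B" using bx by simp
  moreover have "X ** B ** X = X" using bx by (metis matrix_mul_assoc matrix_mul_rid)
  ultimately have "is_moore_penrose B X" unfolding is_moore_penrose_def using bx by simp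
  then show ?thesis by blast
qed

lemma mp_right_inv:
  fixes B :: "real^'n^'m"
  assumes "rank B = CARD('m)"
  shows "B ** moore_penrose B = mat 1"
proof -
  have s: "surj ((*v) B)" using assms full_rank_surjective by blast
  obtain X where X: "is_moore_penrose B X" using mp_exists[OF s] by blast
  have "is_moore_penrose B (moore_penrose B)"
    unfolding moore_penrose_def by (rule theI[of _ X], rule X, rule mp_unique[OF s, symmetric], rule X)
  then show ?thesis using surj_right_inv[OF s] unfolding is_moore_penrose_def by auto
qed

lemma ereal_q:
  assumes "1 \<le> p" "p \<noteq> \<infinity>"
  shows "1 \<le> real_of_ereal p"
  using assms by (cases p) auto

lemma pnorm_ge_comp:
  fixes v :: "real^'n"
  assumes p: "1 \<le> p"
  shows "\<bar>v $ i\<bar> \<le> vec_pnorm p v"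
proof (cases "p = \<infinity>")
  case True
  then show ?thesis unfolding vec_pnorm_def by (simp add: Max_ge)
next
  case False
  define q where "q = real_of_ereal p"
  have q: "1 \<le> q" using p False unfolding q_def by (rule ereal_q)
  have "\<bar>v $ i\<bar> = (\<bar>v $ i\<bar> powr q) powr (1/q)" using q by (simp add: powr_powr)
  also have "\<dots> \<le> (\<Sum>j\<in>UNIV. \<bar>v $ j\<bar> powr q) powr (1/q)"
    by (rule powr_mono2) (use q in \<open>auto intro: member_le_sum\<close>)
  finally show ?thesis using False unfolding vec_pnorm_def q_def by simp
qed

lemma pnorm_le_norm:
  fixes v :: "real^'n"
  assumes p: "1 \<le> p"
  shows "vec_pnorm p v \<le> real CARD('n) * norm v"
proof -
  have N: "1 \<le> real CARD('n)" by simp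
  have M: "\<bar>v $ i\<bar> \<le> norm v" for i by (rule component_le_norm_cart)
  show ?thesis
  proof (cases "p = \<infinity>")
    case True
    have "Max (range (\<lambda>i. \<bar>v $ i\<bar>)) \<le> norm v" using M by auto
    also have "\<dots> \<le> real CARD('n) * norm v" using N by (simp add: mult_le_cancel_right1)
    finally show ?thesis using True unfolding vec_pnorm_def by simp
  next
    case False
    define q where "q = real_of_ereal p"
    have q: "1 \<le> q" using p False unfolding q_def by (rule ereal_q)
    have "(\<Sum>j\<in>UNIV. \<bar>v $ j\<bar> powr q) \<le> (\<Sum>j\<in>(UNIV::'n set). norm v powr q)"
      by (rule sum_mono, rule powr_mono2) (use q M in auto)
    also have "\<dots> = real CARD('n) * norm v powr q" by simp
    finally have s: "(\<Sum>j\<in>UNIV. \<bar>v $ j\<bar> powr q) \<le> real CARD('n) * norm v powr q" .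
    have "(\<Sum>j\<in>UNIV. \<bar>v $ j\<bar> powr q) powr (1/q) \<le> (real CARD('n) * norm v powr q) powr (1/q)"
      by (rule powr_mono2) (use q s in \<open>auto intro: sum_nonneg\<close>)
    also have "\<dots> = real CARD('n) powr (1/q) * norm v"
      using q by (simp add: powr_mult powr_powr)
    also have "\<dots> \<le> real CARD('n) powr 1 * norm v"
      by (rule mult_right_mono, rule powr_mono) (use q N in auto)
    finally show ?thesis using False unfolding vec_pnorm_def q_def by simp
  qed
qed

lemma pnorm_zero:
  assumes p: "1 \<le> p"
  shows "vec_pnorm p (0::real^'n) = 0"
proof (cases "p = \<infinity>")
  case True
  then show ?thesis unfolding vec_pnorm_def by simp
next
  case False
  have q: "1 \<le> real_of_ereal p" using p False by (rule ereal_q)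
  then show ?thesis using False unfolding vec_pnorm_def by simp
qed

lemma pnorm_mat_bound:
  fixes C :: "real^'n^'n"
  assumes p: "1 \<le> p" and c: "mat_pnorm p C \<le> c"
  shows "vec_pnorm p (C *v v) \<le> c * vec_pnorm p v"
proof (cases "v = 0")
  case True
  have z: "vec_pnorm p (0::real^'n) = 0" by (rule pnorm_zero[OF p])
  show ?thesis using True by (simp add: z)
next
  case False
  define N where "N = real CARD('n)"
  have N: "1 \<le> N" unfolding N_def by simp
  have lo: "norm w \<le> N * vec_pnorm p w" for w :: "real^'n"
  proof -
    have "norm w \<le> (\<Sum>i\<in>UNIV. \<bar>w $ i\<bar>)" by (rule norm_le_l1_cart)
    also have "\<dots> \<le> (\<Sum>i\<in>(UNIV::'n set). vec_pnorm p w)" by (rule sum_mono, rule pnorm_ge_comp[OF p])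
    finally show ?thesis unfolding N_def by simp
  qed
  obtain K where K: "\<And>w. norm (C *v w) \<le> norm w * K" and "K > 0"
    using bounded_linear.pos_bounded[OF matrix_vector_mul_bounded_linear] by blast
  have pos: "vec_pnorm p w > 0" if "w \<noteq> 0" for w :: "real^'n"
  proof -
    have "\<exists>i. w $ i \<noteq> 0" using that by (simp add: vec_eq_iff)
    then obtain i where "w $ i \<noteq> 0" by blast
    then show ?thesis using pnorm_ge_comp[OF p, of w i] by simp
  qed
  have r: "vec_pnorm p (C *v x) / vec_pnorm p x \<le> N * N * K" if "x \<in> {x. x \<noteq> 0}" for x
  proof -
    have xp: "vec_pnorm p x > 0" using pos that by simp
    have "vec_pnorm p (C *v x) \<le> N * norm (C *v x)" using pnorm_le_norm[OF p] unfolding N_def by blast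
    also have "\<dots> \<le> N * (norm x * K)" using K N by (simp add: mult_left_mono)
    also have "\<dots> \<le> N * ((N * vec_pnorm p x) * K)" using lo[of x] N \<open>K>0\<close> by (simp add: mult_left_mono mult_right_mono)
    finally show "vec_pnorm p (C *v x) / vec_pnorm p x \<le> N * N * K"
      using xp by (simp add: divide_le_eq algebra_simps)
  qed
  have bdd: "bdd_above ((\<lambda>x. vec_pnorm p (C *v x) / vec_pnorm p x) ` {x. x \<noteq> 0})"
    by (rule bdd_aboveI2, rule r)
  have "vec_pnorm p (C *v v) / vec_pnorm p v \<le> mat_pnorm p C"
    unfolding mat_pnorm_def by (rule cSUP_upper[OF _ bdd]) (use False in simp)
  also note c
  finally show ?thesis using pos[OF False] by (simp add: divide_le_eq)
qed

theorem corollary3p5: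
  fixes A B :: "real^'n^'m" and b :: "real^'m" and p :: ereal
  assumes "rank B = CARD('m)" and "CARD('m) < CARD('n)"
    and "1 \<le> p"
    and "\<forall>i. (moore_penrose B *v b) $ i \<le> 0"
    and "\<forall>i j. (moore_penrose B ** A) $ i $ j \<ge> 0"
    and "mat_pnorm p (moore_penrose B ** A) < 1"
  shows "\<exists>x. (\<forall>i. x $ i \<ge> 0) \<and> A *v x - B *v vec_abs x = b"
proof -
  define X where "X = moore_penrose B"
  define C where "C = X ** A"
  define e where "e = - (X *v b)"
  define c where "c = max (mat_pnorm p C) 0"
  have BX: "B ** X = mat 1" unfolding X_def by (rule mp_right_inv[OF assms(1)])
  have c0: "0 \<le> c" and c1: "c < 1" using assms(6) unfolding c_def C_def X_def by auto
  have Cb: "vec_pnorm p (C *v v) \<le> c * vec_pnorm p v" for v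
    by (rule pnorm_mat_bound[OF assms(3)]) (simp add: c_def)
  have Cnn: "\<And>i j. C $ i $ j \<ge> 0" using assms(5) unfolding C_def X_def by auto
  have enn: "\<And>i. e $ i \<ge> 0" using assms(4) unfolding e_def X_def by auto
  define f where "f = (\<lambda>k. ((\<lambda>v. C *v v) ^^ k) e)"
  have f0: "f 0 = e" and fS: "\<And>k. f (Suc k) = C *v f k" unfolding f_def by auto
  have fnn: "f k $ i \<ge> 0" for k i
  proof (induction k arbitrary: i)
    case 0 then show ?case using f0 enn by simp
  next
    case (Suc k) then show ?case
      unfolding fS by (simp add: matrix_vector_mult_def sum_nonneg Cnn)
  qed
  define E where "E = vec_pnorm p e"
  have fb: "vec_pnorm p (f k) \<le> c ^ k * E" for k
  proof (induction k)
    case 0 then show ?case using f0 E_def by simp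
  next
    case (Suc k)
    have "vec_pnorm p (f (Suc k)) \<le> c * vec_pnorm p (f k)" unfolding fS by (rule Cb)
    also have "\<dots> \<le> c * (c ^ k * E)" using Suc c0 by (simp add: mult_left_mono)
    finally show ?case by simp
  qed
  have fbi: "norm (f k $ i) \<le> c ^ k * E" for k i
    using pnorm_ge_comp[OF assms(3), of "f k" i] fb[of k] by simp
  have sg: "summable (\<lambda>k. c ^ k * E)"
    by (rule summable_mult2, rule summable_geometric) (use c0 c1 in simp)
  have summ: "summable (\<lambda>k. f k $ i)" for i
    by (rule summable_comparison_test[OF _ sg]) (use fbi in auto)
  define s where "s = (\<chi> i. \<Sum>k. f k $ i)"
  have fixp: "s = C *v s + e"
  proof -
    have "(C *v s) $ i + e $ i = s $ i" for i
    proof -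
      have "(C *v s) $ i = (\<Sum>j\<in>UNIV. C $ i $ j * (\<Sum>k. f k $ j))"
        unfolding s_def by (simp add: matrix_vector_mult_def)
      also have "\<dots> = (\<Sum>j\<in>UNIV. \<Sum>k. C $ i $ j * f k $ j)"
        by (rule sum.cong[OF refl], rule suminf_mult[symmetric], rule summ)
      also have "\<dots> = (\<Sum>k. \<Sum>j\<in>UNIV. C $ i $ j * f k $ j)"
        by (rule suminf_sum[symmetric]) (intro summable_mult summ)
      also have "\<dots> = (\<Sum>k. f (Suc k) $ i)" by (simp add: fS matrix_vector_mult_def)
      also have "\<dots> = (\<Sum>k. f k $ i) - f 0 $ i" by (rule suminf_split_head[OF summ])
      finally show ?thesis unfolding s_def f0 by simp
    qed
    then show ?thesis by (simp add: vec_eq_iff)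
  qed
  have snn: "\<forall>i. s $ i \<ge> 0" unfolding s_def using summ fnn by (simp add: suminf_nonneg)
  have va: "vec_abs s = s" using snn unfolding vec_abs_def by (simp add: vec_eq_iff)
  have Be: "B *v e = - b" unfolding e_def
    using linear_neg[OF matrix_vector_mul_linear, of B "X *v b"] by (simp add: matrix_vector_mul_assoc BX)
  have "B *v s = B *v (C *v s) + B *v e" using fixp by (metis matrix_vector_right_distrib)
  also have "\<dots> = A *v s - b"
    unfolding Be unfolding C_def by (simp add: matrix_vector_mul_assoc matrix_mul_assoc BX)
  finally have "A *v s - B *v s = b" by simp
  then show ?thesis using snn va by (metis)
qed

end
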